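(* Let $B$ be an nbc basis of $M$ with $|\mathrm{IA}(B)|=k+1$. Write $B-\mathrm{IA}(B)=\{e_1>\cdots>e_{r-k}\}$ and $(E-B)-\min(E-B)=\{e_{r-k+1}<\cdots<e_{n-k-1}\}$, and let $\mathcal F(B)|\mathcal G(B)$ be the nbc biflag of $B$. Then $(\mathcal F(B)|\mathcal G(B),(e_1,\dots,e_{n-k-1}))\in\mathcal T^{n-k-1}$; equivalently, for every $e\in (B-\mathrm{IA}(B))\cup((E-B)-\min(E-B))$, \[ e=\max\Big(E-\mathrm{cl}\big((B-\mathrm{IA}(B))_{>e}\big)-\mathrm{cl}^\perp\big((E-B)_{>e}\big)\Big), \] where $X_{>e}=\{x\in X:x>e\}$.
   Context: Let $M$ be a matroid with no loops and no coloops on the ground set $E=\{0,1,\dots,n\}$, totally ordered by the usual order of integers, of rank $r+1$; its dual $M^\perp$ has rank $n-r$. Write $\mathrm{cl}$, $\mathrm{cl}^\perp$ for the closure operators of $M$, $M^\perp$. A biflat of $M$ is a pair $F|G$ where $F$ is a flat of $M$, $G$ is a flat of $M^\perp$, both are nonempty, they are not both equal to $E$, and $F\cup G=E$. Two biflats $F|G$, $F'|G'$ are compatible if ($F\subseteq F'$ and $G\supseteq G'$) or ($F\supseteq F'$ and $G\subseteq G'$). A biflag is a set of pairwise compatible biflats with $\bigcup_{F|G}(F\cap G)\neq E$; its length is its number of biflats. For a basis $B$ and $i\in B$, $C^\perp(B,i)$ is the unique cocircuit of $M$ contained in $(E-B)\cup i$ and containing $i$; for $i\notin B$, $C(B,i)$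 is the unique circuit contained in $B\cup i$ and containing $i$. $\mathrm{IA}(B)=\{i\in B: i=\min C^\perp(B,i)\}$, $\mathrm{EA}(B)=\{i\notin B: i=\min C(B,i)\}$. $B$ is an nbc basis if $\mathrm{EA}(B)=\emptyset$. nbc biflag: with $e_1,\dots,e_{n-k-1}$ as in the claim, $\mathcal F(B)|\mathcal G(B)$ is the biflag with biflats $F_j|G_j=\mathrm{cl}\{e_1,\dots,e_j\}|E$ for $1\le j\le r-k$ and $F_j|G_j=E|\mathrm{cl}^\perp\{e_j,\dots,e_{n-k-1}\}$ for $r-k+1\le j\le n-k-1$. $\mathcal T^m$: the set of pairs $(\mathcal F|\mathcal G,\mathbf e)$ with $\mathcal F|\mathcal G$ a biflag of length $m$ with biflats indexed $F_1|G_1,\dots,F_m|G_m$, $F_1\subseteq\cdots\subseteq F_m$, $G_1\supseteq\cdots\supseteq G_m$, and $\mathbf e=(e_1,\dots,e_m)$ distinct elements of $E$ with $e_i\in F_i\cap G_i$ and $e_i=\max\big(E-\bigcup_{j:\,e_j>e_i}(F_j\cap G_j)\big)$ for all $i$. *)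

theory Defs
  imports Main
begin

definition matroid_bases :: "'a set \<Rightarrow> 'a set set \<Rightarrow> bool" where
  "matroid_bases E Bs \<longleftrightarrow> finite E \<and> Bs \<noteq> {} \<and> (\<forall>B\<in>Bs. B \<subseteq> E) \<and>
     (\<forall>B1\<in>Bs. \<forall>B2\<in>Bs. \<forall>x\<in>B1 - B2. \<exists>y\<in>B2 - B1. insert y (B1 - {x}) \<in> Bs)"

definition indep :: "'a set set \<Rightarrow> 'a set \<Rightarrow> bool" where
  "indep Bs X \<longleftrightarrow> (\<exists>B\<in>Bs. X \<subseteq> B)"

definition rk :: "'a set set \<Rightarrow> 'a set \<Rightarrow> nat" where
  "rk Bs X = Max (card ` {I. I \<subseteq> X \<and> indep Bs I})"

definition cl :: "'a set \<Rightarrow> 'a set set \<Rightarrow> 'a set \<Rightarrow> 'a set" where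
  "cl E Bs X = {x\<in>E. rk Bs (insert x X) = rk Bs X}"

definition flat :: "'a set \<Rightarrow> 'a set set \<Rightarrow> 'a set \<Rightarrow> bool" where
  "flat E Bs F \<longleftrightarrow> F \<subseteq> E \<and> cl E Bs F = F"

definition dual_bases :: "'a set \<Rightarrow> 'a set set \<Rightarrow> 'a set set" where
  "dual_bases E Bs = (\<lambda>B. E - B) ` Bs"

definition circuit :: "'a set \<Rightarrow> 'a set set \<Rightarrow> 'a set \<Rightarrow> bool" where
  "circuit E Bs C \<longleftrightarrow> C \<subseteq> E \<and> \<not> indep Bs C \<and> (\<forall>x\<in>C. indep Bs (C - {x}))"

definition fund_circuit :: "'a set \<Rightarrow> 'a set set \<Rightarrow> 'a set \<Rightarrow> 'a \<Rightarrow> 'a set" where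
  "fund_circuit E Bs B i = (THE C. circuit E Bs C \<and> C \<subseteq> insert i B \<and> i \<in> C)"

definition fund_cocircuit :: "'a set \<Rightarrow> 'a set set \<Rightarrow> 'a set \<Rightarrow> 'a \<Rightarrow> 'a set" where
  "fund_cocircuit E Bs B i = fund_circuit E (dual_bases E Bs) (E - B) i"

definition IA :: "'a::linorder set \<Rightarrow> 'a set set \<Rightarrow> 'a set \<Rightarrow> 'a set" where
  "IA E Bs B = {i\<in>B. i = Min (fund_cocircuit E Bs B i)}"

definition EA :: "'a::linorder set \<Rightarrow> 'a set set \<Rightarrow> 'a set \<Rightarrow> 'a set" where
  "EA E Bs B = {i\<in>E - B. i = Min (fund_circuit E Bs B i)}"

definition nbc_basis :: "'a::linorder set \<Rightarrow> 'a set set \<Rightarrow> 'a set \<Rightarrow> bool" where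
  "nbc_basis E Bs B \<longleftrightarrow> B \<in> Bs \<and> EA E Bs B = {}"

definition biflat :: "'a set \<Rightarrow> 'a set set \<Rightarrow> 'a set \<Rightarrow> 'a set \<Rightarrow> bool" where
  "biflat E Bs F G \<longleftrightarrow> flat E Bs F \<and> flat E (dual_bases E Bs) G \<and> F \<noteq> {} \<and> G \<noteq> {}
     \<and> \<not> (F = E \<and> G = E) \<and> F \<union> G = E"

definition compatible :: "'a set \<times> 'a set \<Rightarrow> 'a set \<times> 'a set \<Rightarrow> bool" where
  "compatible p q \<longleftrightarrow> (fst p \<subseteq> fst q \<and> snd p \<supseteq> snd q) \<or> (fst p \<supseteq> fst q \<and> snd p \<subseteq> snd q)"

definition biflag :: "'a set \<Rightarrow> 'a set set \<Rightarrow> ('a set \<times> 'a set) set \<Rightarrow> bool" where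
  "biflag E Bs S \<longleftrightarrow> (\<forall>p\<in>S. biflat E Bs (fst p) (snd p)) \<and> (\<forall>p\<in>S. \<forall>q\<in>S. compatible p q)
     \<and> (\<Union>p\<in>S. fst p \<inter> snd p) \<noteq> E"

(* Membership in T^m of the indexed biflag F_1|G_1,...,F_m|G_m with elements e_1,...,e_m
   (indices 1..m; the biflats are pairwise distinct, so the biflag has length m). *)
definition in_T :: "'a::linorder set \<Rightarrow> 'a set set \<Rightarrow> nat \<Rightarrow> (nat \<Rightarrow> 'a set) \<Rightarrow> (nat \<Rightarrow> 'a set)
     \<Rightarrow> (nat \<Rightarrow> 'a) \<Rightarrow> bool" where
  "in_T E Bs m Fs Gs es \<longleftrightarrow>
     biflag E Bs ((\<lambda>i. (Fs i, Gs i)) ` {1..m}) \<and>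
     inj_on (\<lambda>i. (Fs i, Gs i)) {1..m} \<and>
     (\<forall>i\<in>{1..m}. \<forall>j\<in>{1..m}. i \<le> j \<longrightarrow> Fs i \<subseteq> Fs j \<and> Gs j \<subseteq> Gs i) \<and>
     inj_on es {1..m} \<and> es ` {1..m} \<subseteq> E \<and>
     (\<forall>i\<in>{1..m}. es i \<in> Fs i \<inter> Gs i \<and>
        es i = Max (E - (\<Union>j\<in>{j\<in>{1..m}. es j > es i}. Fs j \<inter> Gs j)))"

(* the sequence e_1,...,e_{n-k-1} attached to a basis B (1-indexed) *)
definition nbc_seq :: "'a::linorder set \<Rightarrow> 'a set set \<Rightarrow> 'a set \<Rightarrow> nat \<Rightarrow> 'a" where
  "nbc_seq E Bs B j = (rev (sorted_list_of_set (B - IA E Bs B))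
      @ sorted_list_of_set ((E - B) - {Min (E - B)})) ! (j - 1)"

(* the nbc biflag F(B)|G(B); r - k = |B - IA(B)|, m = n - k - 1 its length *)
definition nbc_F :: "'a::linorder set \<Rightarrow> 'a set set \<Rightarrow> 'a set \<Rightarrow> nat \<Rightarrow> nat \<Rightarrow> 'a set" where
  "nbc_F E Bs B s j = (if j \<le> s then cl E Bs (nbc_seq E Bs B ` {1..j}) else E)"

definition nbc_G :: "'a::linorder set \<Rightarrow> 'a set set \<Rightarrow> 'a set \<Rightarrow> nat \<Rightarrow> nat \<Rightarrow> nat \<Rightarrow> 'a set" where
  "nbc_G E Bs B s m j = (if j \<le> s then E else cl E (dual_bases E Bs) (nbc_seq E Bs B ` {j..m}))"

end

theory Submission
  imports Defs
begin

locale mat =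
  fixes E :: "'a set" and Bs :: "'a set set" and c :: nat
  assumes mb: "matroid_bases E Bs" and cardB: "\<And>B. B \<in> Bs \<Longrightarrow> card B = c"
begin

lemma finE: "finite E" using mb by (simp add: matroid_bases_def)
lemma Bs_ne: "Bs \<noteq> {}" using mb by (simp add: matroid_bases_def)
lemma B_sub: "B \<in> Bs \<Longrightarrow> B \<subseteq> E" using mb by (simp add: matroid_bases_def)
lemma B_fin: "B \<in> Bs \<Longrightarrow> finite B" using B_sub finE finite_subset by blast
lemma exch: "B1 \<in> Bs \<Longrightarrow> B2 \<in> Bs \<Longrightarrow> x \<in> B1 - B2 \<Longrightarrow> \<exists>y\<in>B2-B1. insert y (B1 - {x}) \<in> Bs"
  using mb unfolding matroid_bases_def by blast
lemma indep_sub: "indep Bs X \<Longrightarrow> Y \<subseteq> X \<Longrightarrow> indep Bs Y"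
  unfolding indep_def by blast
lemma indep_E: "indep Bs X \<Longrightarrow> X \<subseteq> E"
  unfolding indep_def using B_sub by blast
lemma indep_fin: "indep Bs X \<Longrightarrow> finite X"
  using indep_E finE finite_subset by blast
lemma indep_empty: "indep Bs {}"
  unfolding indep_def using Bs_ne by blast
lemma indep_B: "B \<in> Bs \<Longrightarrow> indep Bs B"
  unfolding indep_def by blast
lemma indep_card: "indep Bs X \<Longrightarrow> card X \<le> c"
  unfolding indep_def using cardB B_fin card_mono by metis
lemma indep_card_eq: "indep Bs X \<Longrightarrow> card X = c \<Longrightarrow> X \<in> Bs"
proof -
  assume "indep Bs X" "card X = c"
  then obtain B where B: "B \<in> Bs" "X \<subseteq> B" unfolding indep_def by blast
  then have "X = B" using card_subset_eq[OF B_fin[OF B(1)] B(2)] cardB \<open>card X = c\<close> by simp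
  then show ?thesis using B by simp
qed

lemma rk_fin: "finite {I. I \<subseteq> X \<and> indep Bs I}"
proof -
  have "{I. I \<subseteq> X \<and> indep Bs I} \<subseteq> Pow E" using indep_E by blast
  then show ?thesis using finE finite_subset by blast
qed
lemma rk_ge: "I \<subseteq> X \<Longrightarrow> indep Bs I \<Longrightarrow> card I \<le> rk Bs X"
  unfolding rk_def using rk_fin by (intro Max_ge) auto
lemma rk_obtain: "\<exists>I. I \<subseteq> X \<and> indep Bs I \<and> card I = rk Bs X"
proof -
  have "{} \<in> {I. I \<subseteq> X \<and> indep Bs I}" using indep_empty by simp
  then have "rk Bs X \<in> card ` {I. I \<subseteq> X \<and> indep Bs I}"
    unfolding rk_def using rk_fin by (intro Max_in) auto
  then show ?thesis by auto
qed
lemma rk_indep: "indep Bs X \<Longrightarrow> rk Bs X = card X"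
proof -
  assume a: "indep Bs X"
  obtain I where I: "I \<subseteq> X" "indep Bs I" "card I = rk Bs X" using rk_obtain by blast
  have "card I \<le> card X" using I(1) indep_fin[OF a] card_mono by blast
  moreover have "card X \<le> rk Bs X" using rk_ge[OF _ a] by simp
  ultimately show ?thesis using I by simp
qed

lemma cl_indep: "indep Bs X \<Longrightarrow> x \<in> cl E Bs X \<longleftrightarrow> x \<in> E \<and> (x \<in> X \<or> \<not> indep Bs (insert x X))"
proof -
  assume a: "indep Bs X"
  have fX: "finite X" using indep_fin[OF a] .
  show ?thesis
  proof (cases "x \<in> X")
    case True
    then show ?thesis unfolding cl_def using indep_E[OF a] by (auto simp: insert_absorb)
  next
    case False
    show ?thesis
    proof (cases "indep Bs (insert x X)")
      case True
      then have "rk Bs (insert x X) = card X + 1" using rk_indep False fX by simp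
      then show ?thesis unfolding cl_def using rk_indep[OF a] True False by simp
    next
      case nd: False
      obtain I where I: "I \<subseteq> insert x X" "indep Bs I" "card I = rk Bs (insert x X)" using rk_obtain by blast
      have "I \<noteq> insert x X" using I(2) nd by blast
      then have "card I < card (insert x X)" using I(1) fX by (intro psubset_card_mono) auto
      then have "card I \<le> card X" using False fX by simp
      moreover have "card X \<le> rk Bs (insert x X)" using rk_ge[OF _ a] by auto
      ultimately have "rk Bs (insert x X) = rk Bs X" using I(3) rk_indep[OF a] by simp
      then show ?thesis unfolding cl_def using nd False by auto
    qed
  qed
qed

lemma card_diff_sym: "finite A \<Longrightarrow> finite B \<Longrightarrow> card A = card B \<Longrightarrow> card (A - B) = card (B - A)"
proof -
  assume f: "finite A" "finite B" and e: "card A = card B"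
  have "card (A - B) = card A - card (A \<inter> B)" using f by (simp add: card_Diff_subset_Int)
  moreover have "card (B - A) = card B - card (B \<inter> A)" using f by (simp add: card_Diff_subset_Int)
  ultimately show ?thesis using e by (simp add: Int_commute)
qed

lemma augment:
  assumes iI: "indep Bs I" and iJ: "indep Bs J" and lt: "card I < card J"
  shows "\<exists>y\<in>J - I. indep Bs (insert y I)"
proof (rule ccontr)
  assume noaug: "\<not> (\<exists>y\<in>J - I. indep Bs (insert y I))"
  define P where "P = (\<lambda>p. fst p \<in> Bs \<and> I \<subseteq> fst p \<and> snd p \<in> Bs \<and> J \<subseteq> snd p)"
  obtain B1 B2 where "B1 \<in> Bs" "I \<subseteq> B1" "B2 \<in> Bs" "J \<subseteq> B2" using iI iJ unfolding indep_def by blast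
  then have "P (B1, B2)" unfolding P_def by simp
  then obtain p where Pp: "P p" and pmin: "\<forall>q. P q \<longrightarrow> card (snd p - (J \<union> fst p)) \<le> card (snd q - (J \<union> fst q))"
    using ex_has_least_nat[of P "(B1,B2)" "\<lambda>p. card (snd p - (J \<union> fst p))"] by blast
  obtain B1 B2 where p: "p = (B1, B2)" by (cases p)
  have B1: "B1 \<in> Bs" "I \<subseteq> B1" and B2: "B2 \<in> Bs" "J \<subseteq> B2" using Pp p unfolding P_def by auto
  have s1: "B2 \<subseteq> J \<union> B1"
  proof
    fix x assume xB2: "x \<in> B2"
    show "x \<in> J \<union> B1"
    proof (rule ccontr)
      assume xn: "x \<notin> J \<union> B1"
      obtain y where y: "y \<in> B1 - B2" "insert y (B2 - {x}) \<in> Bs" using exch[OF B2(1) B1(1)] xB2 xn by blast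
      have "P (B1, insert y (B2 - {x}))" unfolding P_def using B1 y B2 xn by auto
      moreover have "insert y (B2 - {x}) - (J \<union> B1) = (B2 - (J \<union> B1)) - {x}" using y by auto
      moreover have "card ((B2 - (J \<union> B1)) - {x}) < card (B2 - (J \<union> B1))"
        using xB2 xn B_fin[OF B2(1)] by (intro card_Diff1_less) auto
      ultimately have "card (insert y (B2 - {x}) - (J \<union> B1)) < card (B2 - (J \<union> B1))" by simp
      moreover have "card (B2 - (J \<union> B1)) \<le> card (insert y (B2 - {x}) - (J \<union> B1))"
        using pmin p \<open>P (B1, insert y (B2 - {x}))\<close> by fastforce
      ultimately show False by simp
    qed
  qed
  have s2: "B1 - B2 \<subseteq> I"
  proof
    fix x assume x: "x \<in> B1 - B2"
    show "x \<in> I"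
    proof (rule ccontr)
      assume xn: "x \<notin> I"
      obtain y where y: "y \<in> B2 - B1" "insert y (B1 - {x}) \<in> Bs" using exch[OF B1(1) B2(1)] x by blast
      have "y \<in> J - I" using y s1 B1 by auto
      moreover have "indep Bs (insert y I)" unfolding indep_def by (rule bexI[OF _ y(2)]) (use xn B1(2) in auto)
      ultimately show False using noaug by blast
    qed
  qed
  have s3: "J - I \<subseteq> B2 - B1"
  proof
    fix y assume y: "y \<in> J - I"
    have "y \<notin> B1"
    proof
      assume "y \<in> B1"
      then have "indep Bs (insert y I)" unfolding indep_def using B1 by blast
      then show False using noaug y by blast
    qed
    then show "y \<in> B2 - B1" using y B2 by auto
  qed
  have s4: "B1 - B2 \<subseteq> I - J" using s2 B2 by auto
  have fI: "finite I" "finite J" using indep_fin iI iJ by auto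
  have "card (J - I) \<le> card (B2 - B1)" using s3 B_fin[OF B2(1)] by (intro card_mono) auto
  also have "\<dots> = card (B1 - B2)" using card_diff_sym[OF B_fin[OF B1(1)] B_fin[OF B2(1)]] cardB B1 B2 by simp
  also have "\<dots> \<le> card (I - J)" using s4 fI by (intro card_mono) auto
  finally have "card (J - I) \<le> card (I - J)" .
  moreover have "card (I - J) < card (J - I)"
  proof -
    have "card (I - J) = card I - card (I \<inter> J)" using fI by (simp add: card_Diff_subset_Int)
    moreover have "card (J - I) = card J - card (J \<inter> I)" using fI by (simp add: card_Diff_subset_Int)
    moreover have "card (I \<inter> J) \<le> card I" using fI by (simp add: card_mono)
    ultimately show ?thesis using lt by (simp add: Int_commute)
  qed
  ultimately show False by simp
qed

lemma extend:
  assumes iJ: "indep Bs J" and JX: "J \<subseteq> X" and B: "B \<in> Bs" and BX: "B \<subseteq> X"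
  shows "\<exists>B3\<in>Bs. J \<subseteq> B3 \<and> B3 \<subseteq> X"
proof -
  define P where "P = (\<lambda>I. J \<subseteq> I \<and> I \<subseteq> X \<and> indep Bs I)"
  have "P J" unfolding P_def using iJ JX by simp
  then obtain I where PI: "P I" and Imin: "\<forall>I'. P I' \<longrightarrow> c - card I \<le> c - card I'"
    using ex_has_least_nat[of P J "\<lambda>I. c - card I"] by blast
  have I: "J \<subseteq> I" "I \<subseteq> X" "indep Bs I" using PI unfolding P_def by auto
  have "card I \<ge> c"
  proof (rule ccontr)
    assume "\<not> card I \<ge> c"
    then have "card I < card B" using cardB B by simp
    then obtain y where y: "y \<in> B - I" "indep Bs (insert y I)" using augment[OF I(3) indep_B[OF B]] by blast
    have "P (insert y I)" unfolding P_def using y I BX by auto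
    moreover have "card (insert y I) = card I + 1" using y indep_fin[OF I(3)] by simp
    ultimately show False using Imin \<open>\<not> card I \<ge> c\<close> by fastforce
  qed
  then have "I \<in> Bs" using indep_card[OF I(3)] indep_card_eq[OF I(3)] by simp
  then show ?thesis using I by blast
qed

lemma cl_sub_E: "cl E Bs X \<subseteq> E" unfolding cl_def by auto
lemma cl_ext: "X \<subseteq> E \<Longrightarrow> X \<subseteq> cl E Bs X" unfolding cl_def by (auto simp: insert_absorb)

lemma cl_cl: assumes iS: "indep Bs S" shows "cl E Bs (cl E Bs S) = cl E Bs S"
proof
  show "cl E Bs S \<subseteq> cl E Bs (cl E Bs S)" using cl_ext[OF cl_sub_E] .
next
  show "cl E Bs (cl E Bs S) \<subseteq> cl E Bs S"
  proof
    fix x assume x: "x \<in> cl E Bs (cl E Bs S)"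
    show "x \<in> cl E Bs S"
    proof (rule ccontr)
      assume xn: "x \<notin> cl E Bs S"
      have xE: "x \<in> E" using x cl_sub_E by blast
      have xS: "x \<notin> S" "indep Bs (insert x S)" using xn xE cl_indep[OF iS] by auto
      have SE: "S \<subseteq> cl E Bs S" using cl_ext[OF indep_E[OF iS]] .
      have eq: "rk Bs (insert x (cl E Bs S)) = rk Bs (cl E Bs S)" using x unfolding cl_def by simp
      have "card (insert x S) \<le> rk Bs (insert x (cl E Bs S))" using SE xS by (intro rk_ge) auto
      then have ge: "card S + 1 \<le> rk Bs (cl E Bs S)" using eq xS indep_fin[OF iS] by simp
      obtain I where I: "I \<subseteq> cl E Bs S" "indep Bs I" "card I = rk Bs (cl E Bs S)" using rk_obtain by blast
      obtain y where y: "y \<in> I - S" "indep Bs (insert y S)" using augment[OF iS I(2)] I(3) ge by auto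
      have "y \<in> cl E Bs S" using y I by auto
      then show False using y cl_indep[OF iS] by auto
    qed
  qed
qed

lemma flat_cl: "indep Bs S \<Longrightarrow> flat E Bs (cl E Bs S)"
  unfolding flat_def using cl_sub_E cl_cl by auto

lemma flat_E: "flat E Bs E" unfolding flat_def cl_def by (auto simp: insert_absorb)

lemma dual_mat: "mat E (dual_bases E Bs) (card E - c)"
proof
  show "matroid_bases E (dual_bases E Bs)"
    unfolding matroid_bases_def
  proof (intro conjI ballI)
    show "finite E" using finE .
    show "dual_bases E Bs \<noteq> {}" using Bs_ne unfolding dual_bases_def by simp
    fix D assume "D \<in> dual_bases E Bs" then show "D \<subseteq> E" unfolding dual_bases_def by auto
  next
    fix D1 D2 x assume D1: "D1 \<in> dual_bases E Bs" and D2: "D2 \<in> dual_bases E Bs" and x: "x \<in> D1 - D2"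
    obtain B1 where B1: "B1 \<in> Bs" "D1 = E - B1" using D1 unfolding dual_bases_def by auto
    obtain B2 where B2: "B2 \<in> Bs" "D2 = E - B2" using D2 unfolding dual_bases_def by auto
    have xE: "x \<in> E" "x \<notin> B1" "x \<in> B2" using x B1 B2 by auto
    have iJ: "indep Bs (insert x (B1 \<inter> B2))" unfolding indep_def using B2 xE by blast
    obtain B3 where B3: "B3 \<in> Bs" "insert x (B1 \<inter> B2) \<subseteq> B3" "B3 \<subseteq> insert x B1"
      using extend[OF iJ _ B1(1), of "insert x B1"] by blast
    have fB1: "finite B1" using B_fin B1 by simp
    have "B3 \<noteq> insert x B1"
    proof
      assume "B3 = insert x B1"
      then have "card B3 = card B1 + 1" using fB1 xE by simp
      then show False using cardB B1 B3 by simp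
    qed
    then obtain y where y: "y \<in> B1" "y \<notin> B3" using B3 by blast
    have yB2: "y \<notin> B2" "y \<noteq> x" using y B3 xE by auto
    have sub: "B3 \<subseteq> insert x (B1 - {y})" using B3 y by auto
    have c1: "card (insert x (B1 - {y})) = Suc (card (B1 - {y}))" using fB1 xE by simp
    have c2: "card (B1 - {y}) = card B1 - 1" using y fB1 by simp
    have c3: "card B1 > 0" using fB1 y by (auto simp: card_gt_0_iff)
    have "card (insert x (B1 - {y})) = card B1" using c1 c2 c3 by simp
    then have "card (insert x (B1 - {y})) = card B3" using cardB B1 B3 by simp
    then have B3eq: "B3 = insert x (B1 - {y})" using card_subset_eq[OF _ sub] fB1 by simp
    have yE: "y \<in> E" using y B_sub B1 by blast
    have "insert y (D1 - {x}) = E - B3" using B1 B3eq yE xE y yB2 by auto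
    then have "insert y (D1 - {x}) \<in> dual_bases E Bs" unfolding dual_bases_def using B3 by blast
    moreover have "y \<in> D2 - D1" using yE y yB2 B1 B2 by auto
    ultimately show "\<exists>y\<in>D2 - D1. insert y (D1 - {x}) \<in> dual_bases E Bs" by blast
  qed
next
  fix D assume "D \<in> dual_bases E Bs"
  then obtain B where "B \<in> Bs" "D = E - B" unfolding dual_bases_def by auto
  then show "card D = card E - c" using cardB B_sub card_Diff_subset B_fin by metis
qed

lemma dep_circuit: assumes XE: "X \<subseteq> E" and nd: "\<not> indep Bs X" shows "\<exists>C\<subseteq>X. circuit E Bs C"
proof -
  define P where "P = (\<lambda>C. C \<subseteq> X \<and> \<not> indep Bs C)"
  have "P X" unfolding P_def using nd by simp
  then obtain C where PC: "P C" and Cmin: "\<forall>C'. P C' \<longrightarrow> card C \<le> card C'"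
    using ex_has_least_nat[of P X card] by blast
  have C: "C \<subseteq> X" "\<not> indep Bs C" using PC unfolding P_def by auto
  have fC: "finite C" using finite_subset[OF _ finE] C XE by blast
  have "\<forall>x\<in>C. indep Bs (C - {x})"
  proof
    fix x assume x: "x \<in> C"
    show "indep Bs (C - {x})"
    proof (rule ccontr)
      assume "\<not> indep Bs (C - {x})"
      then have "P (C - {x})" unfolding P_def using C by auto
      then have "card C \<le> card (C - {x})" using Cmin by blast
      moreover have "card (C - {x}) < card C" using fC x by (intro card_Diff1_less)
      ultimately show False by simp
    qed
  qed
  then have "circuit E Bs C" unfolding circuit_def using C XE by blast
  then show ?thesis using C by blast
qed

lemma circuit_dep: "circuit E Bs C \<Longrightarrow> C \<subseteq> Y \<Longrightarrow> \<not> indep Bs Y"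
  unfolding circuit_def using indep_sub[of Y C] by blast

lemma fund_ex1: assumes B: "B \<in> Bs" and x: "x \<in> E" "x \<notin> B"
  shows "\<exists>!C. circuit E Bs C \<and> C \<subseteq> insert x B \<and> x \<in> C"
proof -
  have fB: "finite B" using B_fin B by simp
  have nd: "\<not> indep Bs (insert x B)"
  proof
    assume "indep Bs (insert x B)"
    then have "card (insert x B) \<le> c" by (rule indep_card)
    then show False using fB x cardB B by simp
  qed
  obtain C where C: "C \<subseteq> insert x B" "circuit E Bs C" using dep_circuit[OF _ nd] B_sub B x by blast
  have xC: "x \<in> C"
  proof (rule ccontr)
    assume "x \<notin> C"
    then have "C \<subseteq> B" using C by auto
    then show False using circuit_dep[OF C(2)] indep_B[OF B] by blast
  qed
  have uniq: "C2 = C" if C2: "circuit E Bs C2" "C2 \<subseteq> insert x B" "x \<in> C2" for C2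
  proof (rule ccontr)
    assume ne: "C2 \<noteq> C"
    have gen: "False" if D1: "circuit E Bs D1" "D1 \<subseteq> insert x B" "x \<in> D1"
         and D2: "circuit E Bs D2" "D2 \<subseteq> insert x B" "x \<in> D2" and y: "y \<in> D1 - D2" for D1 D2 y
    proof -
      have yB: "y \<in> B" "y \<noteq> x" using y D1 D2 by auto
      have iD: "indep Bs (D1 - {y})" using D1(1) y unfolding circuit_def by auto
      obtain B3 where B3: "B3 \<in> Bs" "D1 - {y} \<subseteq> B3" "B3 \<subseteq> insert x B"
        using extend[OF iD _ B, of "insert x B"] D1 by blast
      have "y \<notin> B3"
      proof
        assume "y \<in> B3" then have "D1 \<subseteq> B3" using B3 by auto
        then show False using circuit_dep[OF D1(1)] indep_B[OF B3(1)] by blast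
      qed
      then have sub: "B3 \<subseteq> insert x (B - {y})" using B3 by auto
      have c1: "card (insert x (B - {y})) = Suc (card (B - {y}))" using fB x by simp
      have c2: "card (B - {y}) = card B - 1" using yB fB by simp
      have c3: "card B > 0" using fB yB by (auto simp: card_gt_0_iff)
      have c4: "card B = c" "card B3 = c" using cardB B B3(1) by auto
      have "card (insert x (B - {y})) = card B3" using c1 c2 c3 c4 by linarith
      then have eq: "B3 = insert x (B - {y})" using card_subset_eq[OF _ sub] fB by simp
      have "D2 \<subseteq> B3" using D2 y eq by auto
      then show False using circuit_dep[OF D2(1)] indep_B[OF B3(1)] by blast
    qed
    show False
    proof (cases "C2 \<subseteq> C")
      case True
      then obtain z where z: "z \<in> C - C2" using ne by blast
      then show False using gen[OF C(2) C(1) xC C2] by blast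
    next
      case False
      then obtain z where z: "z \<in> C2 - C" by blast
      then show False using gen[OF C2 C(2) C(1) xC] by blast
    qed
  qed
  show ?thesis
  proof (rule ex1I[of _ C])
    show "circuit E Bs C \<and> C \<subseteq> insert x B \<and> x \<in> C" using C xC by simp
  next
    fix C2 assume "circuit E Bs C2 \<and> C2 \<subseteq> insert x B \<and> x \<in> C2"
    then show "C2 = C" using uniq by simp
  qed
qed

lemma fund_props: assumes "B \<in> Bs" "x \<in> E" "x \<notin> B"
  shows "circuit E Bs (fund_circuit E Bs B x) \<and> fund_circuit E Bs B x \<subseteq> insert x B \<and> x \<in> fund_circuit E Bs B x"
  unfolding fund_circuit_def using theI'[OF fund_ex1[OF assms]] .

lemma fund_eq: assumes "B \<in> Bs" "x \<in> E" "x \<notin> B" "circuit E Bs C" "C \<subseteq> insert x B" "x \<in> C"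
  shows "fund_circuit E Bs B x = C"
  unfolding fund_circuit_def using the1_equality[OF fund_ex1[OF assms(1-3)], of C] assms(4-6) by simp

lemma circuit_fin: "circuit E Bs C \<Longrightarrow> finite C"
  unfolding circuit_def using finite_subset[OF _ finE] by blast

lemma cl_basis: "B \<in> Bs \<Longrightarrow> X \<subseteq> B \<Longrightarrow> b \<in> B \<Longrightarrow> b \<notin> X \<Longrightarrow> b \<notin> cl E Bs X"
proof -
  assume a: "B \<in> Bs" "X \<subseteq> B" "b \<in> B" "b \<notin> X"
  have iX: "indep Bs X" using indep_sub[OF indep_B[OF a(1)] a(2)] .
  have "indep Bs (insert b X)" using indep_sub[OF indep_B[OF a(1)]] a by auto
  then show ?thesis using cl_indep[OF iX] a by auto
qed

lemma cl_fund1: assumes B: "B \<in> Bs" and XB: "X \<subseteq> B" and x: "x \<in> E" "x \<notin> B" and xcl: "x \<in> cl E Bs X"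
  shows "fund_circuit E Bs B x \<subseteq> insert x X"
proof -
  have iX: "indep Bs X" using indep_sub[OF indep_B[OF B] XB] .
  have nd: "\<not> indep Bs (insert x X)" using cl_indep[OF iX] xcl x XB by auto
  obtain C where C: "C \<subseteq> insert x X" "circuit E Bs C" using dep_circuit[OF _ nd] XB B_sub[OF B] x by blast
  have "x \<in> C"
  proof (rule ccontr)
    assume "x \<notin> C" then have "C \<subseteq> X" using C by auto
    then show False using circuit_dep[OF C(2)] iX by blast
  qed
  then have "fund_circuit E Bs B x = C" using fund_eq[OF B x C(2)] C XB by blast
  then show ?thesis using C by simp
qed

lemma cl_fund2: assumes B: "B \<in> Bs" and XB: "X \<subseteq> B" and x: "x \<in> E" "x \<notin> B"
  and sub: "fund_circuit E Bs B x \<subseteq> insert x X"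
  shows "x \<in> cl E Bs X"
proof -
  have iX: "indep Bs X" using indep_sub[OF indep_B[OF B] XB] .
  have "\<not> indep Bs (insert x X)" using circuit_dep[OF _ sub] fund_props[OF B x] by blast
  then show ?thesis using cl_indep[OF iX] x by auto
qed

lemma cl_mono_B: assumes B: "B \<in> Bs" and "X \<subseteq> Y" "Y \<subseteq> B" shows "cl E Bs X \<subseteq> cl E Bs Y"
proof -
  have iX: "indep Bs X" "indep Bs Y" using indep_sub[OF indep_B[OF B]] assms by auto
  show ?thesis
  proof
    fix x assume "x \<in> cl E Bs X"
    then have "x \<in> E" "x \<in> X \<or> \<not> indep Bs (insert x X)" using cl_indep[OF iX(1)] by auto
    moreover have "\<not> indep Bs (insert x X) \<Longrightarrow> \<not> indep Bs (insert x Y)" using indep_sub[of "insert x Y" "insert x X"] assms by blast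
    ultimately show "x \<in> cl E Bs Y" using cl_indep[OF iX(2)] assms by auto
  qed
qed

lemma loop_circuit: "circuit E Bs {x} \<Longrightarrow> B \<in> Bs \<Longrightarrow> x \<notin> B"
proof -
  assume "circuit E Bs {x}" "B \<in> Bs"
  then have "\<not> indep Bs {x}" unfolding circuit_def by simp
  then show "x \<notin> B" using \<open>B \<in> Bs\<close> unfolding indep_def by auto
qed

end
lemma seq_facts:
  fixes P Q :: "nat set" and es :: "nat \<Rightarrow> nat" and s m :: nat
  assumes fP: "finite P" and fQ: "finite Q"
    and es: "\<And>j. es j = (rev (sorted_list_of_set P) @ sorted_list_of_set Q) ! (j - 1)"
    and s: "s = card P" and m: "m = card P + card Q"
  shows "\<forall>j\<in>{1..s}. es j \<in> P"
    and "\<forall>j\<in>{s+1..m}. es j \<in> Q"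
    and "\<forall>i j. 1 \<le> i \<longrightarrow> i < j \<longrightarrow> j \<le> s \<longrightarrow> es j < es i"
    and "\<forall>i j. s < i \<longrightarrow> i < j \<longrightarrow> j \<le> m \<longrightarrow> es i < es j"
    and "\<forall>x\<in>P. \<exists>j\<in>{1..s}. es j = x"
    and "\<forall>x\<in>Q. \<exists>j\<in>{s+1..m}. es j = x"
proof -
  define L1 where "L1 = rev (sorted_list_of_set P)"
  define L2 where "L2 = sorted_list_of_set Q"
  have l1: "length L1 = s" unfolding L1_def s using fP by simp
  have l2: "length L2 = card Q" unfolding L2_def using fQ by simp
  have set1: "set L1 = P" unfolding L1_def using fP by simp
  have set2: "set L2 = Q" unfolding L2_def using fQ by simp
  have so1: "sorted_wrt (>) L1" unfolding L1_def using strict_sorted_list_of_set[of P]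
    by (simp add: sorted_wrt_rev)
  have so2: "sorted_wrt (<) L2" unfolding L2_def using strict_sorted_list_of_set[of Q] by simp
  have e1: "es j = L1 ! (j - 1)" if "j \<in> {1..s}" for j
  proof -
    have "j - 1 < length L1" using that l1 by auto
    then show ?thesis using es[of j] unfolding L1_def[symmetric] L2_def[symmetric] by (simp add: nth_append)
  qed
  have e2: "es j = L2 ! (j - 1 - s)" if "j \<in> {s+1..m}" for j
  proof -
    have "\<not> j - 1 < length L1" using that l1 by auto
    then show ?thesis using es[of j] l1 unfolding L1_def[symmetric] L2_def[symmetric] by (simp add: nth_append)
  qed
  show "\<forall>j\<in>{1..s}. es j \<in> P"
  proof
    fix j assume j: "j \<in> {1..s}"
    then have "j - 1 < length L1" using l1 by auto
    then show "es j \<in> P" using e1[OF j] set1 nth_mem by metis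
  qed
  show "\<forall>j\<in>{s+1..m}. es j \<in> Q"
  proof
    fix j assume j: "j \<in> {s+1..m}"
    then have "j - 1 - s < length L2" using l2 m s by auto
    then show "es j \<in> Q" using e2[OF j] set2 nth_mem by metis
  qed
  show "\<forall>i j. 1 \<le> i \<longrightarrow> i < j \<longrightarrow> j \<le> s \<longrightarrow> es j < es i"
  proof (intro allI impI)
    fix i j assume ij: "1 \<le> i" "i < j" "j \<le> s"
    have "L1 ! (i - 1) > L1 ! (j - 1)" using sorted_wrt_nth_less[OF so1, of "i - 1" "j - 1"] ij l1 by simp
    then show "es j < es i" using e1 ij by simp
  qed
  show "\<forall>i j. s < i \<longrightarrow> i < j \<longrightarrow> j \<le> m \<longrightarrow> es i < es j"
  proof (intro allI impI)
    fix i j assume ij: "s < i" "i < j" "j \<le> m"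
    have "L2 ! (i - 1 - s) < L2 ! (j - 1 - s)" using sorted_wrt_nth_less[OF so2, of "i - 1 - s" "j - 1 - s"] ij l2 m s by simp
    then show "es i < es j" using e2 ij by simp
  qed
  show "\<forall>x\<in>P. \<exists>j\<in>{1..s}. es j = x"
  proof
    fix x assume "x \<in> P"
    then obtain i where i: "i < length L1" "L1 ! i = x" using set1 in_set_conv_nth by metis
    have "Suc i \<in> {1..s}" using i l1 by auto
    moreover have "es (Suc i) = x" using e1[OF \<open>Suc i \<in> {1..s}\<close>] i by simp
    ultimately show "\<exists>j\<in>{1..s}. es j = x" by blast
  qed
  show "\<forall>x\<in>Q. \<exists>j\<in>{s+1..m}. es j = x"
  proof
    fix x assume "x \<in> Q"
    then obtain i where i: "i < length L2" "L2 ! i = x" using set2 in_set_conv_nth by metis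
    have "Suc (i + s) \<in> {s+1..m}" using i l2 m s by auto
    moreover have "es (Suc (i + s)) = x" using e2[OF \<open>Suc (i + s) \<in> {s+1..m}\<close>] i by simp
    ultimately show "\<exists>j\<in>{s+1..m}. es j = x" by blast
  qed
qed

lemma min_fund: fixes E :: "nat set" assumes M: "mat E Bs c" and B: "B \<in> Bs" and e: "e \<in> E" "e \<notin> B" and ne: "e \<noteq> Min (fund_circuit E Bs B e)"
  shows "Min (fund_circuit E Bs B e) < e \<and> Min (fund_circuit E Bs B e) \<in> B"
proof -
  let ?C = "fund_circuit E Bs B e"
  have P: "circuit E Bs ?C" "?C \<subseteq> insert e B" "e \<in> ?C" using mat.fund_props[OF M B e] by auto
  have fC: "finite ?C" using mat.circuit_fin[OF M P(1)] .
  have "Min ?C \<le> e" using Min_le[OF fC P(3)] .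
  moreover have "Min ?C \<in> ?C" using Min_in[OF fC] P(3) by blast
  ultimately show ?thesis using ne P(2) by auto
qed

lemma notcl_gt: fixes E :: "nat set" assumes M: "mat E Bs c" and B: "B \<in> Bs" and XB: "X \<subseteq> B" and gt: "\<forall>y\<in>X. e < y"
  and e: "e \<in> E" "e \<notin> B" and ne: "e \<noteq> Min (fund_circuit E Bs B e)"
  shows "e \<notin> cl E Bs X"
proof
  assume "e \<in> cl E Bs X"
  then have sub: "fund_circuit E Bs B e \<subseteq> insert e X" using mat.cl_fund1[OF M B XB e] by blast
  have m: "Min (fund_circuit E Bs B e) < e" "Min (fund_circuit E Bs B e) \<in> B" using min_fund[OF M B e ne] by auto
  have P: "circuit E Bs (fund_circuit E Bs B e)" "e \<in> fund_circuit E Bs B e" using mat.fund_props[OF M B e] by auto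
  have "Min (fund_circuit E Bs B e) \<in> fund_circuit E Bs B e"
    using Min_in[OF mat.circuit_fin[OF M P(1)]] P(2) by blast
  then have "Min (fund_circuit E Bs B e) \<in> X" using sub m by auto
  then show False using gt m by auto
qed

theorem mainTheorem8:
  fixes n r k :: nat and Bs :: "nat set set" and B :: "nat set"
  assumes "matroid_bases {0..n} Bs"
    and no_loops: "\<forall>x\<in>{0..n}. \<exists>B'\<in>Bs. x \<in> B'"
    and no_coloops: "\<forall>x\<in>{0..n}. \<exists>B'\<in>Bs. x \<notin> B'"
    and rank: "\<forall>B'\<in>Bs. card B' = r + 1"
    and "nbc_basis {0..n} Bs B"
    and "card (IA {0..n} Bs B) = k + 1"
  shows "in_T {0..n} Bs (n - k - 1)
           (nbc_F {0..n} Bs B (r - k))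
           (nbc_G {0..n} Bs B (r - k) (n - k - 1))
           (nbc_seq {0..n} Bs B)"
proof -
  define E :: "nat set" where "E = {0..n}"
  define Bd where "Bd = dual_bases E Bs"
  have mb: "matroid_bases E Bs" using assms(1) E_def by simp
  interpret M: mat E Bs "r+1" using mb rank by unfold_locales auto
  have DM: "mat E Bd (card E - (r+1))" unfolding Bd_def by (rule M.dual_mat)
  interpret D: mat E Bd "card E - (r+1)" by (rule DM)
  have BB: "B \<in> Bs" using assms(5) unfolding nbc_basis_def by simp
  have EA: "\<forall>i\<in>E-B. i \<noteq> Min (fund_circuit E Bs B i)" using assms(5) unfolding nbc_basis_def EA_def E_def by auto
  have DB: "E - B \<in> Bd" unfolding Bd_def dual_bases_def using BB by blast
  have finE: "finite E" unfolding E_def by simp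
  have BE: "B \<subseteq> E" using M.B_sub[OF BB] .
  have fB: "finite B" using M.B_fin[OF BB] .
  define IAs where "IAs = IA E Bs B"
  have IAs': "IAs = {i\<in>B. i = Min (fund_circuit E Bd (E - B) i)}"
    unfolding IAs_def IA_def fund_cocircuit_def Bd_def by simp
  have cardIA: "card IAs = k + 1" using assms(6) unfolding IAs_def E_def by simp
  have IAB: "IAs \<subseteq> B" unfolding IAs' by auto
  have cB: "card B = r + 1" using rank BB by simp
  have kr: "k \<le> r" using card_mono[OF fB IAB] cardIA cB by simp
  have rn: "r + 1 \<le> n"
  proof -
    obtain B' where B': "B' \<in> Bs" "0 \<notin> B'" using no_coloops[rule_format, of 0] by auto
    have "B' \<subseteq> {1..n}"
    proof
      fix x assume x: "x \<in> B'"
      then have "x \<in> {0..n}" using M.B_sub[OF B'(1)] unfolding E_def by blast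
      then show "x \<in> {1..n}" using x B'(2) by (cases x) auto
    qed
    then have "card B' \<le> n" using card_mono[of "{1..n}" B'] by simp
    then show ?thesis using rank B' by simp
  qed
  have cE: "card E = n + 1" unfolding E_def by simp
  have cEB: "card (E - B) = n - r" using card_Diff_subset[OF fB BE] cE cB by simp
  have EBne: "E - B \<noteq> {}"
  proof
    assume h: "E - B = {}" have "card (E - B) = 0" unfolding h by simp
    then show False using cEB rn by simp
  qed
  define d0 where "d0 = Min (E - B)"
  have fEB: "finite (E - B)" using finE by simp
  have d0a: "d0 \<in> E - B" unfolding d0_def by (rule Min_in[OF fEB EBne])
  have d0b: "\<forall>y\<in>E-B. d0 \<le> y"
  proof
    fix y assume "y \<in> E - B" then show "d0 \<le> y" unfolding d0_def by (rule Min_le[OF fEB])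
  qed
  note d0 = d0a d0b
  define Dp where "Dp = (E - B) - {d0}"
  define s where "s = r - k"
  define m where "m = n - k - 1"
  have fIA: "finite IAs" using finite_subset[OF IAB fB] .
  have cBI: "card (B - IAs) = s" using card_Diff_subset[OF fIA IAB] cardIA cB unfolding s_def by simp
  have cDp: "card Dp = n - r - 1" unfolding Dp_def using cEB d0 finE by simp
  have cm: "m = card (B - IAs) + card Dp" using cBI cDp kr rn unfolding m_def s_def by simp
  define es where "es = nbc_seq E Bs B"
  have es_eq: "\<And>j. es j = (rev (sorted_list_of_set (B - IAs)) @ sorted_list_of_set Dp) ! (j - 1)"
    unfolding es_def nbc_seq_def IAs_def Dp_def d0_def by simp
  have fBI: "finite (B - IAs)" using fB by simp
  have fDp: "finite Dp" unfolding Dp_def using finE by simp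
  note SF = seq_facts[OF fBI fDp es_eq cBI[symmetric] cm]
  have F1: "\<forall>j\<in>{1..s}. es j \<in> B - IAs" using SF(1) .
  have F2: "\<forall>j\<in>{s+1..m}. es j \<in> Dp" using SF(2) .
  have F3: "\<forall>i j. 1 \<le> i \<longrightarrow> i < j \<longrightarrow> j \<le> s \<longrightarrow> es j < es i" using SF(3) .
  have F4: "\<forall>i j. s < i \<longrightarrow> i < j \<longrightarrow> j \<le> m \<longrightarrow> es i < es j" using SF(4) .
  have F5: "\<forall>x\<in>B - IAs. \<exists>j\<in>{1..s}. es j = x" using SF(5) .
  have F6: "\<forall>x\<in>Dp. \<exists>j\<in>{s+1..m}. es j = x" using SF(6) .
  have sm: "s \<le> m" using cm cBI by simp

  define S where "S = (\<lambda>j. es ` {1..j})"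
  define T where "T = (\<lambda>j. es ` {j..m})"
  define F where "F = nbc_F E Bs B s"
  define G where "G = nbc_G E Bs B s m"
  have Fj: "\<And>j. F j = (if j \<le> s then cl E Bs (S j) else E)"
    unfolding F_def nbc_F_def S_def es_def by simp
  have Gj: "\<And>j. G j = (if j \<le> s then E else cl E Bd (T j))"
    unfolding G_def nbc_G_def T_def es_def Bd_def by simp
  have hS: "S j \<subseteq> B - IAs \<and> (\<forall>y\<in>S j. es j \<le> y) \<and> es j \<in> S j" if j: "j \<in> {1..s}" for j
  proof -
    have "es i \<in> B - IAs \<and> es j \<le> es i" if i: "i \<in> {1..j}" for i
    proof -
      have "es i \<in> B - IAs" using F1 i j by auto
      moreover have "es j \<le> es i"
      proof (cases "i = j")
        case False then have "i < j" using i by auto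
        moreover have "1 \<le> i" "j \<le> s" using i j by auto
        ultimately have "es j < es i" using F3 by blast
        then show ?thesis by simp
      qed simp
      ultimately show ?thesis by simp
    qed
    then show ?thesis unfolding S_def using j by auto
  qed
  have hT: "T j \<subseteq> Dp \<and> (\<forall>y\<in>T j. es j \<le> y) \<and> es j \<in> T j \<and> (\<forall>y\<in>Dp. es j \<le> y \<longrightarrow> y \<in> T j)"
    if j: "j \<in> {s+1..m}" for j
  proof -
    have "es i \<in> Dp \<and> es j \<le> es i" if i: "i \<in> {j..m}" for i
    proof -
      have "es i \<in> Dp" using F2 i j by auto
      moreover have "es j \<le> es i"
      proof (cases "i = j")
        case False then have "j < i" using i by auto
        moreover have "s < j" "i \<le> m" using i j by auto
        ultimately have "es j < es i" using F4 by blast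
        then show ?thesis by simp
      qed simp
      ultimately show ?thesis by simp
    qed
    moreover have "y \<in> T j" if y: "y \<in> Dp" "es j \<le> y" for y
    proof -
      obtain i where i: "i \<in> {s+1..m}" "es i = y" using F6 y by blast
      have "\<not> i < j"
      proof
        assume "i < j" then have "es i < es j" using F4 i j by auto
        then show False using i y by simp
      qed
      then have "i \<in> {j..m}" using i by auto
      then show ?thesis unfolding T_def using i by blast
    qed
    ultimately show ?thesis unfolding T_def using j by auto
  qed
  have hd0: "d0 < es i" if i: "i \<in> {1..m}" for i
  proof (cases "i \<le> s")
    case True
    then have e: "es i \<in> B" "es i \<notin> IAs" using F1 i by auto
    then have ne: "es i \<noteq> Min (fund_circuit E Bd (E - B) (es i))" using IAs' by auto
    have "Min (fund_circuit E Bd (E - B) (es i)) < es i \<and> Min (fund_circuit E Bd (E - B) (es i)) \<in> E - B"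
      using min_fund[OF DM DB _ _ ne] e BE by auto
    then have m: "Min (fund_circuit E Bd (E - B) (es i)) < es i" "Min (fund_circuit E Bd (E - B) (es i)) \<in> E - B" by auto
    have "d0 \<le> Min (fund_circuit E Bd (E - B) (es i))" using d0(2) m(2) by blast
    then show ?thesis using m(1) by linarith
  next
    case False
    then have "es i \<in> Dp" using F2 i by auto
    then have "es i \<in> E - B" "es i \<noteq> d0" unfolding Dp_def by auto
    moreover have "d0 \<le> es i" using d0(2) calculation(1) by blast
    ultimately show ?thesis by linarith
  qed
  have part: "y \<in> B - IAs \<or> y \<in> IAs \<or> y \<in> Dp \<or> y = d0" if "y \<in> E" for y
    using that IAB unfolding Dp_def by auto
  have "IAs \<noteq> {}"
  proof
    assume h: "IAs = {}" have "card IAs = 0" unfolding h by simp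
    then show False using cardIA by simp
  qed
  then obtain b0 where b0: "b0 \<in> IAs" by blast
  have bif: "biflat E Bs (F j) (G j)" if j: "j \<in> {1..m}" for j
  proof (cases "j \<le> s")
    case True
    have FJ: "F j = cl E Bs (S j)" "G j = E" using Fj Gj True by simp_all
    have h: "S j \<subseteq> B - IAs" "es j \<in> S j" using hS[of j] j True by auto
    have iS: "indep Bs (S j)" using M.indep_sub[OF M.indep_B[OF BB]] h by auto
    have SE: "S j \<subseteq> E" using h BE by auto
    have a1: "es j \<in> cl E Bs (S j)" using M.cl_ext[OF SE] h by blast
    have a2: "b0 \<notin> cl E Bs (S j)" using M.cl_basis[OF BB, of "S j" b0] h b0 IAB by auto
    have a3: "b0 \<in> E" using b0 IAB BE by auto
    have a4: "cl E Bs (S j) \<union> E = E" using M.cl_sub_E by blast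
    show ?thesis unfolding biflat_def FJ Bd_def[symmetric]
    proof (intro conjI)
      show "flat E Bs (cl E Bs (S j))" by (rule M.flat_cl[OF iS])
      show "flat E Bd E" by (rule D.flat_E)
      show "cl E Bs (S j) \<noteq> {}" using a1 by blast
      show "E \<noteq> {}" using a3 by blast
      show "\<not> (cl E Bs (S j) = E \<and> E = E)" using a2 a3 by blast
      show "cl E Bs (S j) \<union> E = E" by (rule a4)
    qed
  next
    case False
    then have j': "j \<in> {s+1..m}" using j by auto
    have FJ: "F j = E" "G j = cl E Bd (T j)" using Fj Gj False by simp_all
    have h: "T j \<subseteq> Dp" "es j \<in> T j" using hT[OF j'] by auto
    have TE: "T j \<subseteq> E - B" using h unfolding Dp_def by auto
    have iT: "indep Bd (T j)" using D.indep_sub[OF D.indep_B[OF DB] TE] .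
    have TE': "T j \<subseteq> E" using TE by blast
    have a1: "es j \<in> cl E Bd (T j)" using D.cl_ext[OF TE'] h by blast
    have d0T: "d0 \<notin> T j" using h unfolding Dp_def by blast
    have a2: "d0 \<notin> cl E Bd (T j)" using D.cl_basis[OF DB TE d0a d0T] .
    have a3: "d0 \<in> E" using d0a by blast
    have a4: "E \<union> cl E Bd (T j) = E" using D.cl_sub_E by blast
    show ?thesis unfolding biflat_def FJ Bd_def[symmetric]
    proof (intro conjI)
      show "flat E Bs E" by (rule M.flat_E)
      show "flat E Bd (cl E Bd (T j))" by (rule D.flat_cl[OF iT])
      show "cl E Bd (T j) \<noteq> {}" using a1 by blast
      show "E \<noteq> {}" using a3 by blast
      show "\<not> (E = E \<and> cl E Bd (T j) = E)" using a2 a3 by blast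
      show "E \<union> cl E Bd (T j) = E" by (rule a4)
    qed
  qed
  have MM: "mat E Bs (r+1)" by (rule M.mat_axioms)
  have SB: "S j \<subseteq> B" if "j \<in> {1..s}" for j using hS[OF that] by blast
  have TB: "T j \<subseteq> E - B" if "j \<in> {s+1..m}" for j using hT[OF that] unfolding Dp_def by blast
  have mono: "F i \<subseteq> F j \<and> G j \<subseteq> G i" if i: "i \<in> {1..m}" and j: "j \<in> {1..m}" and ij: "i \<le> j" for i j
  proof (cases "j \<le> s")
    case True
    have "S i \<subseteq> S j" unfolding S_def using ij by (intro image_mono) auto
    then have "cl E Bs (S i) \<subseteq> cl E Bs (S j)" using M.cl_mono_B[OF BB _ SB[of j]] True j by auto
    then show ?thesis using Fj Gj True ij by simp
  next
    case False
    show ?thesis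
    proof (cases "i \<le> s")
      case True
      then show ?thesis using Fj Gj False M.cl_sub_E D.cl_sub_E by simp
    next
      case F2: False
      have "T j \<subseteq> T i" unfolding T_def using ij by (intro image_mono) auto
      then have "cl E Bd (T j) \<subseteq> cl E Bd (T i)" using D.cl_mono_B[OF DB _ TB[of i]] F2 i by auto
      then show ?thesis using Fj Gj False F2 by simp
    qed
  qed
  have dist: "(F i, G i) \<noteq> (F j, G j)" if i: "i \<in> {1..m}" and j: "j \<in> {1..m}" and ij: "i < j" for i j
  proof (cases "j \<le> s")
    case True
    have ej: "es j \<in> S j" "es j \<in> B - IAs" using hS[of j] F1 True j by auto
    have "es j < es i" using F3 i j ij True by auto
    then have "es j \<notin> S i" using hS[of i] True i ij by force
    then have "es j \<notin> cl E Bs (S i)" using M.cl_basis[OF BB SB[of i]] ej True i ij by auto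
    moreover have "es j \<in> cl E Bs (S j)"
    proof -
      have "j \<in> {1..s}" using True j by auto
      then have "S j \<subseteq> E" using SB BE by blast
      then show ?thesis using M.cl_ext ej by blast
    qed
    ultimately show ?thesis using Fj True ij by auto
  next
    case False
    show ?thesis
    proof (cases "i \<le> s")
      case True
      have "b0 \<notin> cl E Bs (S i)" using M.cl_basis[OF BB SB[of i], of b0] b0 IAB True i hS[of i] by auto
      moreover have "b0 \<in> E" using b0 IAB BE by auto
      ultimately show ?thesis using Fj True False by auto
    next
      case F2: False
      have i': "i \<in> {s+1..m}" and j': "j \<in> {s+1..m}" using i j F2 False by auto
      have ei: "es i \<in> T i" "es i \<in> Dp" using hT[OF i'] F2 F2 by auto
      have "es i < es j" using F4 i j ij F2 by auto
      then have "es i \<notin> T j" using hT[OF j'] by force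
      then have "es i \<notin> cl E Bd (T j)" using D.cl_basis[OF DB TB[OF j']] ei unfolding Dp_def by auto
      moreover have "es i \<in> cl E Bd (T i)"
      proof -
        have "T i \<subseteq> E" using TB[OF i'] by blast
        then show ?thesis using D.cl_ext ei by blast
      qed
      ultimately show ?thesis using Gj F2 False by auto
    qed
  qed
  have injFG: "inj_on (\<lambda>i. (F i, G i)) {1..m}"
  proof (rule inj_onI)
    fix i j assume i: "i \<in> {1..m}" and j: "j \<in> {1..m}" and eq: "(F i, G i) = (F j, G j)"
    show "i = j"
    proof (rule ccontr)
      assume "i \<noteq> j"
      then have "i < j \<or> j < i" by arith
      then show False using dist[OF i j] dist[OF j i] eq by auto
    qed
  qed
  have d0U: "d0 \<notin> F j \<inter> G j" if j: "j \<in> {1..m}" for j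
  proof (cases "j \<le> s")
    case True
    have j': "j \<in> {1..s}" using j True by auto
    have d0E: "d0 \<in> E" "d0 \<notin> B" using d0a by auto
    show ?thesis
    proof
      assume "d0 \<in> F j \<inter> G j"
      then have "d0 \<in> cl E Bs (S j)" using Fj True by auto
      then have sub: "fund_circuit E Bs B d0 \<subseteq> insert d0 (S j)" using M.cl_fund1[OF BB SB[OF j'] d0E] by blast
      have ne: "d0 \<noteq> Min (fund_circuit E Bs B d0)" using EA d0a by blast
      have mb1: "Min (fund_circuit E Bs B d0) < d0" "Min (fund_circuit E Bs B d0) \<in> B"
        using min_fund[OF MM BB d0E ne] by auto
      have fp: "circuit E Bs (fund_circuit E Bs B d0)" "d0 \<in> fund_circuit E Bs B d0"
        using M.fund_props[OF BB d0E] by auto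
      have "Min (fund_circuit E Bs B d0) \<in> fund_circuit E Bs B d0"
        using Min_in[OF M.circuit_fin[OF fp(1)]] fp(2) by blast
      then have "Min (fund_circuit E Bs B d0) \<in> S j" using sub mb1 by auto
      then have bb: "Min (fund_circuit E Bs B d0) \<in> B - IAs" using hS[OF j'] by blast
      define b where "b = Min (fund_circuit E Bs B d0)"
      have bB: "b \<in> B" "b \<notin> IAs" "b < d0" using bb mb1 unfolding b_def by auto
      have bE: "b \<in> E" "b \<notin> E - B" using bB BE by auto
      have ne2: "b \<noteq> Min (fund_circuit E Bd (E - B) b)" using bB IAs' by auto
      have "Min (fund_circuit E Bd (E - B) b) < b \<and> Min (fund_circuit E Bd (E - B) b) \<in> E - B"
        using min_fund[OF DM DB bE ne2] .
      then have z: "Min (fund_circuit E Bd (E - B) b) < b" "Min (fund_circuit E Bd (E - B) b) \<in> E - B" by auto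
      have "d0 \<le> Min (fund_circuit E Bd (E - B) b)" using d0b z(2) by blast
      then show False using z(1) bB(3) by linarith
    qed
  next
    case False
    have j': "j \<in> {s+1..m}" using j False by auto
    have d0T: "d0 \<notin> T j" using hT[OF j'] unfolding Dp_def by blast
    have "d0 \<notin> cl E Bd (T j)" using D.cl_basis[OF DB TB[OF j'] d0a d0T] .
    then show ?thesis using Gj False by auto
  qed
  have maxc: "es i \<in> F i \<inter> G i \<and> es i = Max (E - (\<Union>j\<in>{j\<in>{1..m}. es j > es i}. F j \<inter> G j))"
    if i: "i \<in> {1..m}" for i
  proof -
    define e where "e = es i"
    define U where "U = (\<Union>j\<in>{j\<in>{1..m}. es j > e}. F j \<inter> G j)"
    have he: "e \<in> B - IAs \<or> e \<in> Dp" using F1 F2 i unfolding e_def by (cases "i \<le> s") auto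
    have eE: "e \<in> E" using he BE unfolding Dp_def by auto
    have d0e: "d0 < e" using hd0[OF i] unfolding e_def .
    have eFG: "e \<in> F i \<inter> G i"
    proof (cases "i \<le> s")
      case True
      then have i': "i \<in> {1..s}" using i by auto
      have "S i \<subseteq> E" using SB[OF i'] BE by blast
      then have "e \<in> cl E Bs (S i)" using M.cl_ext hS[OF i'] unfolding e_def by blast
      then show ?thesis using Fj Gj True eE by simp
    next
      case False
      then have i': "i \<in> {s+1..m}" using i by auto
      have "T i \<subseteq> E" using TB[OF i'] by blast
      then have "e \<in> cl E Bd (T i)" using D.cl_ext hT[OF i'] unfolding e_def by blast
      then show ?thesis using Fj Gj False eE by simp
    qed
    have notU: "e \<notin> F j \<inter> G j" if j: "j \<in> {1..m}" and ej: "es j > e" for j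
    proof (cases "j \<le> s")
      case True
      then have j': "j \<in> {1..s}" using j by auto
      have gt: "\<forall>y\<in>S j. e < y" using hS[OF j'] ej by force
      have "e \<notin> cl E Bs (S j)"
      proof (cases "e \<in> B - IAs")
        case True
        then have "e \<notin> S j" using gt by blast
        then show ?thesis using M.cl_basis[OF BB SB[OF j']] True by blast
      next
        case False
        then have eD: "e \<in> Dp" using he by blast
        then have eB: "e \<notin> B" unfolding Dp_def by blast
        have ne: "e \<noteq> Min (fund_circuit E Bs B e)" using EA eE eB by blast
        show ?thesis using notcl_gt[OF MM BB SB[OF j'] gt eE eB ne] .
      qed
      then show ?thesis using Fj True by auto
    next
      case False
      then have j': "j \<in> {s+1..m}" using j by auto
      have gt: "\<forall>y\<in>T j. e < y" using hT[OF j'] ej by force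
      have "e \<notin> cl E Bd (T j)"
      proof (cases "e \<in> Dp")
        case True
        then have "e \<notin> T j" "e \<in> E - B" using gt unfolding Dp_def by auto
        then show ?thesis using D.cl_basis[OF DB TB[OF j']] by blast
      next
        case False
        then have eD: "e \<in> B - IAs" using he by blast
        then have eB: "e \<notin> E - B" by blast
        have ne: "e \<noteq> Min (fund_circuit E Bd (E - B) e)" using eD IAs' by blast
        show ?thesis using notcl_gt[OF DM DB TB[OF j'] gt eE eB ne] .
      qed
      then show ?thesis using Gj False by auto
    qed
    have allU: "y \<in> U" if y: "y \<in> E" "e < y" for y
    proof -
      have "y \<in> B - IAs \<or> y \<in> IAs \<or> y \<in> Dp \<or> y = d0" using part[OF y(1)] .
      moreover have ?thesis if yc: "y \<in> B - IAs"
      proof -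
        obtain j where j: "j \<in> {1..s}" "es j = y" using F5 yc by blast
        have "S j \<subseteq> E" using SB[OF j(1)] BE by blast
        then have "y \<in> cl E Bs (S j)" using M.cl_ext hS[OF j(1)] j(2) by blast
        then have "y \<in> F j \<inter> G j" using Fj Gj j y by simp
        moreover have "j \<in> {1..m}" using j sm by auto
        ultimately show ?thesis unfolding U_def using j y by blast
      qed
      moreover have ?thesis if yc: "y \<in> Dp"
      proof -
        obtain j where j: "j \<in> {s+1..m}" "es j = y" using F6 yc by blast
        have "T j \<subseteq> E" using TB[OF j(1)] by blast
        then have "y \<in> cl E Bd (T j)" using D.cl_ext hT[OF j(1)] j(2) by blast
        then have "y \<in> F j \<inter> G j" using Fj Gj j y by simp
        moreover have "j \<in> {1..m}" using j by auto
        ultimately show ?thesis unfolding U_def using j y by blast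
      qed
      moreover have False if "y = d0" using that y d0e by simp
      moreover have ?thesis if yc: "y \<in> IAs"
      proof -
        have yE: "y \<in> E" "y \<notin> E - B" using yc IAB y by auto
        define C where "C = fund_circuit E Bd (E - B) y"
        have fp: "circuit E Bd C" "C \<subseteq> insert y (E - B)" "y \<in> C"
          using D.fund_props[OF DB yE] unfolding C_def by auto
        have ymin: "y = Min C" using yc IAs' unfolding C_def by blast
        have fC: "finite C" using D.circuit_fin[OF fp(1)] .
        have "C \<noteq> {y}"
        proof
          assume "C = {y}"
          then have lc: "circuit E Bd {y}" using fp(1) by simp
          obtain B' where B': "B' \<in> Bs" "y \<notin> B'" using no_coloops y(1) unfolding E_def by blast
          have "E - B' \<in> Bd" unfolding Bd_def dual_bases_def using B'(1) by blast
          then have "y \<notin> E - B'" using D.loop_circuit[OF lc] by blast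
          then show False using B'(2) y(1) by blast
        qed
        then have C'ne: "C - {y} \<noteq> {}" using fp(3) by blast
        have fC': "finite (C - {y})" using fC by simp
        define w where "w = Min (C - {y})"
        have zprop: "z \<in> Dp \<and> y < z" if z: "z \<in> C - {y}" for z
        proof -
          have "Min C \<le> z" using Min_le[OF fC] z by blast
          then have yz: "y < z" using ymin z by auto
          have zEB: "z \<in> E - B" using fp(2) z by blast
          have "z \<noteq> d0" using yz y(2) d0e by auto
          then show ?thesis using zEB yz unfolding Dp_def by blast
        qed
        have wC: "w \<in> C - {y}" unfolding w_def using Min_in[OF fC' C'ne] .
        have wle: "w \<le> z" if "z \<in> C - {y}" for z unfolding w_def using Min_le[OF fC' that] .
        have wD: "w \<in> Dp" "y < w" using zprop[OF wC] by auto
        obtain j where j: "j \<in> {s+1..m}" "es j = w" using F6 wD(1) by blast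
        have "C \<subseteq> insert y (T j)"
        proof
          fix z assume zc: "z \<in> C"
          show "z \<in> insert y (T j)"
          proof (cases "z = y")
            case False
            then have zz: "z \<in> C - {y}" using zc by blast
            then have "z \<in> Dp" "es j \<le> z" using zprop[OF zz] wle[OF zz] j(2) by auto
            then show ?thesis using hT[OF j(1)] by blast
          qed simp
        qed
        then have "y \<in> cl E Bd (T j)" using D.cl_fund2[OF DB TB[OF j(1)] yE] unfolding C_def by blast
        then have "y \<in> F j \<inter> G j" using Fj Gj j y by simp
        moreover have "j \<in> {1..m}" using j by auto
        moreover have "es j > e" using j wD y by simp
        ultimately show ?thesis unfolding U_def by blast
      qed
      ultimately show ?thesis by blast
    qed
    have eU: "e \<notin> U" unfolding U_def using notU by blast
    have fU: "finite (E - U)" using finE by simp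
    have "Max (E - U) = e"
    proof (rule Max_eqI[OF fU])
      fix y assume "y \<in> E - U"
      then show "y \<le> e" using allU by (meson DiffD1 DiffD2 not_le)
    next
      show "e \<in> E - U" using eE eU by blast
    qed
    then show ?thesis using eFG unfolding U_def e_def by simp
  qed
  have esE: "es i \<in> E" if i: "i \<in> {1..m}" for i
    using F1 F2 i BE unfolding Dp_def by (cases "i \<le> s") auto
  have injes: "inj_on es {1..m}"
  proof (rule inj_onI)
    fix i j assume i: "i \<in> {1..m}" and j: "j \<in> {1..m}" and eq: "es i = es j"
    have neq: False if ij: "i < j" and i: "i \<in> {1..m}" and j: "j \<in> {1..m}" and eq: "es i = es j" for i j
    proof (cases "j \<le> s")
      case True
      have "1 \<le> i" "j \<le> s" using i True by auto
      then have "es j < es i" using F3 ij by blast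
      then show False using eq by simp
    next
      case False
      show False
      proof (cases "i \<le> s")
        case True
        then have "es i \<in> B" using F1 i by auto
        moreover have "es j \<in> Dp" using F2 j False by auto
        ultimately show False using eq unfolding Dp_def by auto
      next
        case False
        have "s < i" "j \<le> m" using j False by auto
        then have "es i < es j" using F4 ij by blast
        then show False using eq by simp
      qed
    qed
    show "i = j"
    proof (rule ccontr)
      assume "i \<noteq> j"
      then have "i < j \<or> j < i" by arith
      then show False using neq[OF _ i j eq] neq[OF _ j i eq[symmetric]] by blast
    qed
  qed
  have compat: "compatible p q" if p: "p \<in> (\<lambda>i. (F i, G i)) ` {1..m}" and q: "q \<in> (\<lambda>i. (F i, G i)) ` {1..m}" for p q
  proof -
    obtain i where i: "i \<in> {1..m}" "p = (F i, G i)" using p by blast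
    obtain j where j: "j \<in> {1..m}" "q = (F j, G j)" using q by blast
    show ?thesis
    proof (cases "i \<le> j")
      case True then show ?thesis using mono[OF i(1) j(1)] i j unfolding compatible_def by simp
    next
      case False then show ?thesis using mono[OF j(1) i(1)] i j unfolding compatible_def by simp
    qed
  qed
  have unionE: "(\<Union>p\<in>(\<lambda>i. (F i, G i)) ` {1..m}. fst p \<inter> snd p) \<noteq> E"
  proof
    assume "(\<Union>p\<in>(\<lambda>i. (F i, G i)) ` {1..m}. fst p \<inter> snd p) = E"
    then have "d0 \<in> (\<Union>p\<in>(\<lambda>i. (F i, G i)) ` {1..m}. fst p \<inter> snd p)" using d0a by blast
    then obtain j where "j \<in> {1..m}" "d0 \<in> F j \<inter> G j" by auto
    then show False using d0U by blast
  qed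
  have bfl: "biflag E Bs ((\<lambda>i. (F i, G i)) ` {1..m})"
    unfolding biflag_def using bif compat unionE by auto
  have "in_T E Bs m F G es"
    unfolding in_T_def
  proof (intro conjI)
    show "biflag E Bs ((\<lambda>i. (F i, G i)) ` {1..m})" by (rule bfl)
    show "inj_on (\<lambda>i. (F i, G i)) {1..m}" by (rule injFG)
    show "\<forall>i\<in>{1..m}. \<forall>j\<in>{1..m}. i \<le> j \<longrightarrow> F i \<subseteq> F j \<and> G j \<subseteq> G i" using mono by blast
    show "inj_on es {1..m}" by (rule injes)
    show "es ` {1..m} \<subseteq> E" using esE by blast
    show "\<forall>i\<in>{1..m}. es i \<in> F i \<inter> G i \<and> es i = Max (E - (\<Union>j\<in>{j \<in> {1..m}. es i < es j}. F j \<inter> G j))"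
      using maxc by blast
  qed
  then show ?thesis unfolding F_def G_def es_def m_def s_def E_def .
qed
end
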